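(* In the setting of the discrete snake in $\mathbb{Z}^4$ described in the context, let $k\ge1$ be such that $\mathbb{P}(\widehat W_k=0)>0$, and let $\widetilde W_k=(\widetilde W_k(j))_{j\le0}$ with $\widetilde W_k(j)=W_k(\zeta_k+j)$. Under $\mathbb{P}(\cdot\mid\widehat W_k=0)$, the pairs $(W_0,\widetilde W_k)$ and $(\widetilde W_k,W_0)$ have the same distribution.
   Context: $\theta$ is a symmetric probability measure on $\mathbb{Z}^4$ with small exponential moments, not supported on a strict subgroup, with covariance matrix $\sigma^2\mathrm{Id}$. $S$ is the random walk with jump law $\theta$ started at $0$. The discrete snake $(W_n)$ is the Markov chain on paths $w:\{k\le\zeta(w)\}\to\mathbb{Z}^4$ with kernel $Q(w,\cdot)=\frac12\delta_{\overline w}+\frac12\sum_x\theta(x)\delta_{w\oplus(\widehat w+x)}$ ($\widehat w=w(\zeta(w))$, $\overline w$ erases the endpoint, $w\oplus x$ appends $x$); $\zeta_n=\zeta(W_n)$. Under $\mathbb{P}$, $\zeta_0=0$ and $W_0=(-S_{-k})_{k\le0}$. *)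

theory Defs
  imports "HOL-Probability.Probability"
begin

type_synonym site = "int ^ 4"

text \<open>A snake path w : {k \<le> \<zeta>(w)} \<rightarrow> Z^4 is encoded as the pair (\<zeta>(w), f) with
  f k = w(k) for k \<le> \<zeta>(w) (values of f above \<zeta>(w) are irrelevant; the operations
  below keep them equal to 0).\<close>
type_synonym spath = "int \<times> (int \<Rightarrow> site)"

definition lifetime :: "spath \<Rightarrow> int" where "lifetime w = fst w"
definition tip :: "spath \<Rightarrow> site" where "tip w = snd w (fst w)"

definition erase :: "spath \<Rightarrow> spath" where
  "erase w = (fst w - 1, (snd w)(fst w := 0))"

definition append_pt :: "spath \<Rightarrow> site \<Rightarrow> spath" where
  "append_pt w x = (fst w + 1, (snd w)(fst w + 1 := x))"

definition snake_step :: "spath \<Rightarrow> site option \<Rightarrow> spath" where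
  "snake_step w m = (case m of None \<Rightarrow> erase w | Some x \<Rightarrow> append_pt w (tip w + x))"

definition move_pmf :: "site pmf \<Rightarrow> site option pmf" where
  "move_pmf \<theta> = bind_pmf (bernoulli_pmf (1/2))
      (\<lambda>b. if b then return_pmf None else map_pmf Some \<theta>)"

text \<open>Canonical probability space: an i.i.d. stream of pairs (X_{n+1}, M_{n+1}) where
  the X's are the increments of the random walk S and the M's the moves of the snake.\<close>
definition snake_space :: "site pmf \<Rightarrow> (site \<times> site option) stream measure" where
  "snake_space \<theta> = stream_space (measure_pmf (pair_pmf \<theta> (move_pmf \<theta>)))"

definition rw :: "(site \<times> site option) stream \<Rightarrow> nat \<Rightarrow> site" where
  "rw \<omega> n = (\<Sum>i<n. fst (\<omega> !! i))"

definition W0 :: "(site \<times> site option) stream \<Rightarrow> int \<Rightarrow> site" where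
  "W0 \<omega> j = (if j \<le> 0 then - rw \<omega> (nat (- j)) else 0)"

fun snake :: "(site \<times> site option) stream \<Rightarrow> nat \<Rightarrow> spath" where
  "snake \<omega> 0 = (0, W0 \<omega>)"
| "snake \<omega> (Suc n) = snake_step (snake \<omega> n) (snd (\<omega> !! n))"

definition Wtilde :: "(site \<times> site option) stream \<Rightarrow> nat \<Rightarrow> int \<Rightarrow> site" where
  "Wtilde \<omega> k j = (if j \<le> 0 then snd (snake \<omega> k) (lifetime (snake \<omega> k) + j) else 0)"

definition path_space :: "(int \<Rightarrow> site) measure" where
  "path_space = PiM UNIV (\<lambda>_. count_space UNIV)"

definition pair_path_space :: "((int \<Rightarrow> site) \<times> (int \<Rightarrow> site)) measure" where
  "pair_path_space = path_space \<Otimes>\<^sub>M path_space"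

definition symmetric_law :: "site pmf \<Rightarrow> bool" where
  "symmetric_law \<theta> \<longleftrightarrow> (\<forall>x. pmf \<theta> (- x) = pmf \<theta> x)"

definition small_exp_moments :: "site pmf \<Rightarrow> bool" where
  "small_exp_moments \<theta> \<longleftrightarrow> (\<exists>c>0. integrable (measure_pmf \<theta>)
      (\<lambda>x. exp (c * (\<Sum>i\<in>UNIV. real_of_int \<bar>x $ i\<bar>))))"

definition is_subgroup :: "site set \<Rightarrow> bool" where
  "is_subgroup H \<longleftrightarrow> 0 \<in> H \<and> (\<forall>x\<in>H. \<forall>y\<in>H. x - y \<in> H)"

definition not_on_strict_subgroup :: "site pmf \<Rightarrow> bool" where
  "not_on_strict_subgroup \<theta> \<longleftrightarrow>
     (\<forall>H. is_subgroup H \<and> set_pmf \<theta> \<subseteq> H \<longrightarrow> H = UNIV)"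

definition covariance_scalar :: "site pmf \<Rightarrow> real \<Rightarrow> bool" where
  "covariance_scalar \<theta> \<sigma> \<longleftrightarrow> (\<forall>i j.
      integrable (measure_pmf \<theta>) (\<lambda>x. real_of_int (x $ i) * real_of_int (x $ j)) \<and>
      measure_pmf.expectation \<theta> (\<lambda>x. real_of_int (x $ i) * real_of_int (x $ j))
        = (if i = j then \<sigma>\<^sup>2 else 0))"

end

theory Submission
  imports Defs
begin


definition stepP :: "site stream \<Rightarrow> site option \<Rightarrow> site stream" where
  "stepP Y m = (case m of None \<Rightarrow> stl Y | Some y \<Rightarrow> y ## Y)"
definition dlt :: "site stream \<Rightarrow> site option \<Rightarrow> site" where
  "dlt Y m = (case m of None \<Rightarrow> - shd Y | Some y \<Rightarrow> y)"
definition flp :: "site option \<Rightarrow> site stream \<Rightarrow> site option" where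
  "flp m Y = (case m of None \<Rightarrow> Some (shd Y) | Some y \<Rightarrow> None)"

fun Pm :: "site stream \<Rightarrow> (nat \<Rightarrow> site option) \<Rightarrow> nat \<Rightarrow> site stream" where
  "Pm X M 0 = X"
| "Pm X M (Suc n) = stepP (Pm X M n) (M n)"

fun tpm :: "site stream \<Rightarrow> (nat \<Rightarrow> site option) \<Rightarrow> nat \<Rightarrow> site" where
  "tpm X M 0 = 0"
| "tpm X M (Suc n) = tpm X M n + dlt (Pm X M n) (M n)"

definition Rk :: "nat \<Rightarrow> site stream \<times> (nat \<Rightarrow> site option) \<Rightarrow> site stream \<times> (nat \<Rightarrow> site option)" where
  "Rk k = (\<lambda>(X, M). (Pm X M k, \<lambda>s. if s < k then flp (M (k - 1 - s)) (Pm X M (k - 1 - s)) else M s))"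

definition Vk :: "nat \<Rightarrow> site stream \<times> (nat \<Rightarrow> site option) \<Rightarrow> site stream \<times> (nat \<Rightarrow> site option)" where
  "Vk k = (\<lambda>(Y, N). (stepP Y (N k), \<lambda>s. if s = 0 then flp (N k) Y else if s \<le> k then N (s - 1) else N s))"

definition Gp :: "site stream \<Rightarrow> int \<Rightarrow> site" where
  "Gp Y j = (if j \<le> 0 then - (\<Sum>i<nat (- j). Y !! i) else 0)"

lemma Rk_Suc: "Rk (Suc k) = Vk k \<circ> Rk k"
  by (auto simp: Rk_def Vk_def fun_eq_iff Suc_diff_le not_less le_Suc_eq)

lemma reversal:
  fixes X M k
  defines "X' \<equiv> fst (Rk k (X, M))" and "M' \<equiv> snd (Rk k (X, M))"
  shows "s \<le> k \<Longrightarrow> Pm X' M' s = Pm X M (k - s) \<and> tpm X' M' s = tpm X M (k - s) - tpm X M k"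
proof (induction s)
  case 0 then show ?case by (simp add: X'_def Rk_def)
next
  case (Suc s)
  then have IH: "Pm X' M' s = Pm X M (k - s)" "tpm X' M' s = tpm X M (k - s) - tpm X M k" by auto
  define t where "t = k - 1 - s"
  have kt: "k - s = Suc t" using Suc.prems by (simp add: t_def)
  have kt2: "k - Suc s = t" using Suc.prems by (simp add: t_def)
  have Ms: "M' s = flp (M t) (Pm X M t)" using Suc.prems by (simp add: M'_def Rk_def t_def)
  show ?case
  proof (cases "M t")
    case None
    then show ?thesis using IH kt kt2 Ms
      by (simp add: stepP_def dlt_def flp_def)
  next
    case (Some y)
    then show ?thesis using IH kt kt2 Ms
      by (simp add: stepP_def dlt_def flp_def)
  qed
qed

lemma snake_repr:
  fixes \<omega> :: "(site \<times> site option) stream"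
  defines "X \<equiv> smap fst \<omega>" and "M \<equiv> (\<lambda>n. snd (\<omega> !! n))"
  shows "tip (snake \<omega> n) = tpm X M n \<and>
    (\<forall>i::nat. snd (snake \<omega> n) (fst (snake \<omega> n) - int i) = tpm X M n - (\<Sum>i'<i. Pm X M n !! i'))"
proof (induction n)
  case 0
  show ?case by (simp add: tip_def W0_def rw_def X_def)
next
  case (Suc n)
  obtain z f where sn: "snake \<omega> n = (z, f)" by (cases "snake \<omega> n")
  have tp: "f z = tpm X M n" and va: "\<And>i. f (z - int i) = tpm X M n - (\<Sum>i'<i. Pm X M n !! i')"
    using Suc sn by (auto simp: tip_def)
  show ?case
  proof (cases "M n")
    case None
    then have sno: "snd (\<omega> !! n) = None" by (simp add: M_def)
    have "f (z - 1) = tpm X M n - shd (Pm X M n)" using va[of 1] by simp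
    moreover have "\<And>i. f (z - 1 - int i) = tpm X M n - shd (Pm X M n) - (\<Sum>i'<i. stl (Pm X M n) !! i')"
    proof -
      fix i
      have "f (z - 1 - int i) = f (z - int (Suc i))" by (simp add: algebra_simps)
      also have "\<dots> = tpm X M n - (\<Sum>i'<Suc i. Pm X M n !! i')" by (rule va)
      also have "(\<Sum>i'<Suc i. Pm X M n !! i') = shd (Pm X M n) + (\<Sum>i'<i. stl (Pm X M n) !! i')"
        by (subst sum.lessThan_Suc_shift) simp
      finally show "f (z - 1 - int i) = tpm X M n - shd (Pm X M n) - (\<Sum>i'<i. stl (Pm X M n) !! i')"
        by (simp add: algebra_simps)
    qed
    ultimately show ?thesis using None sno sn
      by (simp add: snake_step_def erase_def tip_def stepP_def dlt_def)
  next
    case (Some y)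
    then have sno: "snd (\<omega> !! n) = Some y" by (simp add: M_def)
    have "\<And>i. (if z + 1 - int i = z + 1 then f z + y else f (z + 1 - int i)) =
         tpm X M n + y - (\<Sum>i'<i. (y ## Pm X M n) !! i')"
    proof -
      fix i
      show "(if z + 1 - int i = z + 1 then f z + y else f (z + 1 - int i)) =
         tpm X M n + y - (\<Sum>i'<i. (y ## Pm X M n) !! i')"
      proof (cases i)
        case 0 then show ?thesis using tp by simp
      next
        case (Suc j)
        have "f (z + 1 - int i) = f (z - int j)" using Suc by simp
        also have "\<dots> = tpm X M n - (\<Sum>i'<j. Pm X M n !! i')" by (rule va)
        moreover have "(\<Sum>i'<i. (y ## Pm X M n) !! i') = y + (\<Sum>i'<j. Pm X M n !! i')"
          unfolding Suc sum.lessThan_Suc_shift by simp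
        ultimately show ?thesis using Suc by simp
      qed
    qed
    then show ?thesis using Some sno sn tp
      apply (simp add: snake_step_def append_pt_def tip_def stepP_def dlt_def)
      by (metis gr_implies_not0)
  qed
qed


abbreviation Xs :: "site pmf \<Rightarrow> site stream measure" where
  "Xs \<theta> \<equiv> stream_space (measure_pmf \<theta>)"
abbreviation Ms :: "site pmf \<Rightarrow> (nat \<Rightarrow> site option) measure" where
  "Ms \<theta> \<equiv> PiM (UNIV::nat set) (\<lambda>_. measure_pmf (move_pmf \<theta>))"
definition Om :: "site pmf \<Rightarrow> (site stream \<times> (nat \<Rightarrow> site option)) measure" where
  "Om \<theta> = Xs \<theta> \<Otimes>\<^sub>M Ms \<theta>"

lemma meas_M [measurable]: "(\<lambda>\<omega>. snd \<omega> n) \<in> Om \<theta> \<rightarrow>\<^sub>M count_space UNIV"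
  unfolding Om_def by measurable

lemma meas_X [measurable]: "fst \<in> Om \<theta> \<rightarrow>\<^sub>M Xs \<theta>"
  unfolding Om_def by measurable

lemma meas_shd [measurable]: "shd \<in> Xs \<theta> \<rightarrow>\<^sub>M count_space UNIV"
  by measurable

lemma meas_Pm [measurable]: "(\<lambda>\<omega>. Pm (fst \<omega>) (snd \<omega>) n) \<in> Om \<theta> \<rightarrow>\<^sub>M Xs \<theta>"
proof (induction n)
  case 0 then show ?case by simp
next
  case (Suc n)
  note [measurable] = Suc
  have "(\<lambda>\<omega>. (\<lambda>m \<omega>. stepP (Pm (fst \<omega>) (snd \<omega>) n) m) (snd \<omega> n) \<omega>) \<in> Om \<theta> \<rightarrow>\<^sub>M Xs \<theta>"
  proof (rule measurable_compose_countable[OF _ meas_M])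
    fix m :: "site option"
    show "(\<lambda>\<omega>. stepP (Pm (fst \<omega>) (snd \<omega>) n) m) \<in> Om \<theta> \<rightarrow>\<^sub>M Xs \<theta>"
      by (cases m) (simp_all add: stepP_def)
  qed
  then show ?case by simp
qed

lemma meas_tpm [measurable]: "(\<lambda>\<omega>. tpm (fst \<omega>) (snd \<omega>) n) \<in> Om \<theta> \<rightarrow>\<^sub>M count_space UNIV"
proof (induction n)
  case 0 then show ?case by simp
next
  case (Suc n)
  note [measurable] = Suc
  have "(\<lambda>\<omega>. (\<lambda>m \<omega>. tpm (fst \<omega>) (snd \<omega>) n + dlt (Pm (fst \<omega>) (snd \<omega>) n) m) (snd \<omega> n) \<omega>) \<in> Om \<theta> \<rightarrow>\<^sub>M count_space UNIV"
  proof (rule measurable_compose_countable[OF _ meas_M])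
    fix m :: "site option"
    show "(\<lambda>\<omega>. tpm (fst \<omega>) (snd \<omega>) n + dlt (Pm (fst \<omega>) (snd \<omega>) n) m) \<in> Om \<theta> \<rightarrow>\<^sub>M count_space UNIV"
      by (cases m) (simp_all add: dlt_def)
  qed
  then show ?case by simp
qed

lemma meas_flp [measurable]: "(\<lambda>\<omega>. flp (snd \<omega> t) (Pm (fst \<omega>) (snd \<omega>) t')) \<in> Om \<theta> \<rightarrow>\<^sub>M count_space UNIV"
proof -
  have "(\<lambda>\<omega>. (\<lambda>m \<omega>. flp m (Pm (fst \<omega>) (snd \<omega>) t')) (snd \<omega> t) \<omega>) \<in> Om \<theta> \<rightarrow>\<^sub>M count_space UNIV"
  proof (rule measurable_compose_countable[OF _ meas_M])
    fix m :: "site option"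
    show "(\<lambda>\<omega>. flp m (Pm (fst \<omega>) (snd \<omega>) t')) \<in> Om \<theta> \<rightarrow>\<^sub>M count_space UNIV"
      by (cases m) (simp_all add: flp_def)
  qed
  then show ?thesis by simp
qed

lemma meas_Rk [measurable]: "Rk k \<in> Om \<theta> \<rightarrow>\<^sub>M Om \<theta>"
proof -
  have "Rk k = (\<lambda>\<omega>. (Pm (fst \<omega>) (snd \<omega>) k, \<lambda>s. if s < k then flp (snd \<omega> (k - 1 - s)) (Pm (fst \<omega>) (snd \<omega>) (k - 1 - s)) else snd \<omega> s))"
    by (auto simp: Rk_def fun_eq_iff)
  moreover have "\<dots> \<in> Om \<theta> \<rightarrow>\<^sub>M Om \<theta>"
    unfolding Om_def[of \<theta>]
    apply (rule measurable_Pair)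
    apply (fold Om_def) apply measurable
    apply (rule measurable_PiM_single')
    subgoal for s by (cases "s < k", simp_all add: meas_flp meas_M)
    apply auto
    done
  ultimately show ?thesis by simp
qed

lemma meas_stepk [measurable]: "(\<lambda>\<omega>. stepP (fst \<omega>) (snd \<omega> k)) \<in> Om \<theta> \<rightarrow>\<^sub>M Xs \<theta>"
proof -
  have "(\<lambda>\<omega>. (\<lambda>m \<omega>. stepP (fst \<omega>) m) (snd \<omega> k) \<omega>) \<in> Om \<theta> \<rightarrow>\<^sub>M Xs \<theta>"
  proof (rule measurable_compose_countable[OF _ meas_M])
    fix m :: "site option"
    show "(\<lambda>\<omega>. stepP (fst \<omega>) m) \<in> Om \<theta> \<rightarrow>\<^sub>M Xs \<theta>"
      by (cases m) (simp_all add: stepP_def)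
  qed
  then show ?thesis by simp
qed

lemma meas_Vk [measurable]: "Vk k \<in> Om \<theta> \<rightarrow>\<^sub>M Om \<theta>"
proof -
  have "Vk k = (\<lambda>\<omega>. (stepP (fst \<omega>) (snd \<omega> k), \<lambda>s. if s = 0 then flp (snd \<omega> k) (Pm (fst \<omega>) (snd \<omega>) 0) else if s \<le> k then snd \<omega> (s - 1) else snd \<omega> s))"
    by (auto simp: Vk_def fun_eq_iff)
  moreover
  have m2: "(\<lambda>\<omega>. \<lambda>s. if s = 0 then flp (snd \<omega> k) (Pm (fst \<omega>) (snd \<omega>) 0) else if s \<le> k then snd \<omega> (s - 1) else snd \<omega> s) \<in> Om \<theta> \<rightarrow>\<^sub>M Ms \<theta>"
  proof (rule measurable_PiM_single')
    fix s :: nat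
    show "(\<lambda>\<omega>. if s = 0 then flp (snd \<omega> k) (Pm (fst \<omega>) (snd \<omega>) 0) else if s \<le> k then snd \<omega> (s - 1) else snd \<omega> s) \<in> Om \<theta> \<rightarrow>\<^sub>M measure_pmf (move_pmf \<theta>)"
      using meas_flp[where t=k and t'="0::nat" and \<theta>=\<theta>] meas_M[where n="s - 1" and \<theta>=\<theta>] meas_M[where n=s and \<theta>=\<theta>]
      by (cases "s = 0"; cases "s \<le> k") simp_all
  qed auto
  have "(\<lambda>\<omega>. (stepP (fst \<omega>) (snd \<omega> k), \<lambda>s. if s = 0 then flp (snd \<omega> k) (Pm (fst \<omega>) (snd \<omega>) 0) else if s \<le> k then snd \<omega> (s - 1) else snd \<omega> s)) \<in> Om \<theta> \<rightarrow>\<^sub>M Om \<theta>"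
    unfolding Om_def[of \<theta>] using m2 meas_stepk[where k=k and \<theta>=\<theta>] unfolding Om_def
    by (rule_tac measurable_Pair) auto
  ultimately show ?thesis by simp
qed


lemma ps_Xs: "prob_space (Xs \<theta>)"
  by (rule prob_space.prob_space_stream_space[OF prob_space_measure_pmf])
lemma ps_Ms: "prob_space (Ms \<theta>)"
  by (rule prob_space_PiM) (rule prob_space_measure_pmf)
lemma ps_Om: "prob_space (Om \<theta>)"
  unfolding Om_def by (intro prob_space_pair ps_Xs ps_Ms)

lemma nn_integral_move:
  "(\<integral>\<^sup>+u. f u \<partial>measure_pmf (move_pmf \<theta>)) =
     ennreal (1/2) * f None + ennreal (1/2) * (\<integral>\<^sup>+y. f (Some y) \<partial>measure_pmf \<theta>)"
  by (simp add: move_pmf_def nn_integral_map_pmf mult.commute)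

lemma emeasure_move:
  "emeasure (measure_pmf (move_pmf \<theta>)) B =
     ennreal (1/2) * indicator B None + ennreal (1/2) * emeasure (measure_pmf \<theta>) (Some -` B)"
proof -
  have "emeasure (measure_pmf (move_pmf \<theta>)) B = (\<integral>\<^sup>+u. indicator B u \<partial>measure_pmf (move_pmf \<theta>))"
    by (simp add: nn_integral_indicator)
  also have "\<dots> = ennreal (1/2) * indicator B None + ennreal (1/2) * (\<integral>\<^sup>+y. indicator (Some -` B) y \<partial>measure_pmf \<theta>)"
  proof -
    have eq: "\<And>y. indicator B (Some y) = (indicator (Some -` B) y :: ennreal)"
      by (simp add: indicator_def)
    show ?thesis by (subst nn_integral_move) (simp add: eq)
  qed
  finally show ?thesis by (simp add: nn_integral_indicator)
qed

definition Fm :: "site stream \<times> site option \<Rightarrow> site stream \<times> site option" where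
  "Fm = (\<lambda>(Y, n). (stepP Y n, flp n Y))"

abbreviation "Nu \<theta> \<equiv> measure_pmf (move_pmf \<theta>)"

lemma meas_Fm [measurable]: "Fm \<in> (Xs \<theta> \<Otimes>\<^sub>M Nu \<theta>) \<rightarrow>\<^sub>M (Xs \<theta> \<Otimes>\<^sub>M Nu \<theta>)"
proof -
  have "(\<lambda>z. (\<lambda>m z. (stepP (fst z) m, flp m (fst z))) (snd z) z) \<in> (Xs \<theta> \<Otimes>\<^sub>M Nu \<theta>) \<rightarrow>\<^sub>M (Xs \<theta> \<Otimes>\<^sub>M Nu \<theta>)"
  proof (rule measurable_compose_countable[where f="\<lambda>m z. (stepP (fst z) m, flp m (fst z))" and g=snd])
    fix m :: "site option"
    show "(\<lambda>z. (stepP (fst z) m, flp m (fst z))) \<in> (Xs \<theta> \<Otimes>\<^sub>M Nu \<theta>) \<rightarrow>\<^sub>M (Xs \<theta> \<Otimes>\<^sub>M Nu \<theta>)"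
      by (cases m) (simp_all add: stepP_def flp_def)
  qed measurable
  moreover have "Fm = (\<lambda>z. (\<lambda>m z. (stepP (fst z) m, flp m (fst z))) (snd z) z)"
    by (auto simp: Fm_def fun_eq_iff)
  ultimately show ?thesis by simp
qed

lemma Fm_pres: "distr (Xs \<theta> \<Otimes>\<^sub>M Nu \<theta>) (Xs \<theta> \<Otimes>\<^sub>M Nu \<theta>) Fm = Xs \<theta> \<Otimes>\<^sub>M Nu \<theta>"
proof (rule pair_measure_eqI[symmetric])
  interpret X: prob_space "Xs \<theta>" by (rule ps_Xs)
  interpret N: prob_space "Nu \<theta>" by (rule prob_space_measure_pmf)
  interpret T: prob_space "measure_pmf \<theta>" by (rule prob_space_measure_pmf)
  show "sigma_finite_measure (Xs \<theta>)" "sigma_finite_measure (Nu \<theta>)"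
    by unfold_locales
  show "sets (Xs \<theta> \<Otimes>\<^sub>M Nu \<theta>) = sets (distr (Xs \<theta> \<Otimes>\<^sub>M Nu \<theta>) (Xs \<theta> \<Otimes>\<^sub>M Nu \<theta>) Fm)"
    by simp
  fix A B assume A[measurable]: "A \<in> sets (Xs \<theta>)" and B[measurable]: "B \<in> sets (Nu \<theta>)"
  have "emeasure (distr (Xs \<theta> \<Otimes>\<^sub>M Nu \<theta>) (Xs \<theta> \<Otimes>\<^sub>M Nu \<theta>) Fm) (A \<times> B)
      = (\<integral>\<^sup>+z. indicator (A \<times> B) z \<partial>distr (Xs \<theta> \<Otimes>\<^sub>M Nu \<theta>) (Xs \<theta> \<Otimes>\<^sub>M Nu \<theta>) Fm)"
    using A B by (subst nn_integral_indicator) auto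
  also have "\<dots> = (\<integral>\<^sup>+z. indicator (A \<times> B) (Fm z) \<partial>(Xs \<theta> \<Otimes>\<^sub>M Nu \<theta>))"
    using A B by (subst nn_integral_distr) auto
  also have "\<dots> = (\<integral>\<^sup>+Y. \<integral>\<^sup>+n. indicator (A \<times> B) (Fm (Y, n)) \<partial>Nu \<theta> \<partial>Xs \<theta>)"
    using A B by (subst measure_pmf.nn_integral_fst[symmetric]) auto
  also have "\<dots> = (\<integral>\<^sup>+Y. ennreal (1/2) * (indicator A (stl Y) * indicator B (Some (shd Y)))
        + ennreal (1/2) * (indicator B None * (\<integral>\<^sup>+y. indicator A (y ## Y) \<partial>measure_pmf \<theta>)) \<partial>Xs \<theta>)"
    by (subst nn_integral_move)
       (simp add: Fm_def stepP_def flp_def indicator_times nn_integral_cmult mult.commute)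
  also have "\<dots> = ennreal (1/2) * (\<integral>\<^sup>+Y. indicator A (stl Y) * indicator B (Some (shd Y)) \<partial>Xs \<theta>)
        + ennreal (1/2) * (indicator B None * (\<integral>\<^sup>+Y. \<integral>\<^sup>+y. indicator A (y ## Y) \<partial>measure_pmf \<theta> \<partial>Xs \<theta>))"
    by (subst nn_integral_add) (auto simp: nn_integral_cmult)
  also have "(\<integral>\<^sup>+Y. indicator A (stl Y) * indicator B (Some (shd Y)) \<partial>Xs \<theta>)
       = (\<integral>\<^sup>+x. \<integral>\<^sup>+Y. indicator A Y * indicator B (Some x) \<partial>Xs \<theta> \<partial>measure_pmf \<theta>)"
    by (subst prob_space.nn_integral_stream_space[OF prob_space_measure_pmf]) auto
  also have "\<dots> = (\<integral>\<^sup>+x. emeasure (Xs \<theta>) A * indicator (Some -` B) x \<partial>measure_pmf \<theta>)"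
    using A by (simp add: nn_integral_multc) (simp add: indicator_def mult.commute)
  also have "\<dots> = emeasure (Xs \<theta>) A * emeasure (measure_pmf \<theta>) (Some -` B)"
    by (simp add: nn_integral_cmult)
  also have "(\<integral>\<^sup>+Y. \<integral>\<^sup>+y. indicator A (y ## Y) \<partial>measure_pmf \<theta> \<partial>Xs \<theta>)
       = (\<integral>\<^sup>+y. \<integral>\<^sup>+Y. indicator A (y ## Y) \<partial>Xs \<theta> \<partial>measure_pmf \<theta>)"
  proof -
    interpret P: pair_sigma_finite "Xs \<theta>" "measure_pmf \<theta>" by unfold_locales
    show ?thesis by (subst P.Fubini'[symmetric]) auto
  qed
  also have "\<dots> = emeasure (Xs \<theta>) A"
    using A by (subst prob_space.nn_integral_stream_space[OF prob_space_measure_pmf, symmetric]) auto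
  finally show "emeasure (Xs \<theta>) A * emeasure (Nu \<theta>) B =
    emeasure (distr (Xs \<theta> \<Otimes>\<^sub>M Nu \<theta>) (Xs \<theta> \<Otimes>\<^sub>M Nu \<theta>) Fm) (A \<times> B)"
    by (simp add: emeasure_move algebra_simps)
qed


abbreviation RestM :: "nat \<Rightarrow> site pmf \<Rightarrow> (nat \<Rightarrow> site option) measure" where
  "RestM k \<theta> \<equiv> PiM (UNIV - {k}) (\<lambda>_. Nu \<theta>)"

definition Jm :: "nat \<Rightarrow> (site stream \<times> site option) \<times> (nat \<Rightarrow> site option) \<Rightarrow> site stream \<times> (nat \<Rightarrow> site option)" where
  "Jm k = (\<lambda>((Y, n), r). (Y, r(k := n)))"

lemma meas_ins: "(\<lambda>w. (snd w)(k := fst w)) \<in> (Nu \<theta> \<Otimes>\<^sub>M RestM k \<theta>) \<rightarrow>\<^sub>M Ms \<theta>"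
proof -
  have m: "(\<lambda>w s. if s = k then fst w else snd w s) \<in> (Nu \<theta> \<Otimes>\<^sub>M RestM k \<theta>) \<rightarrow>\<^sub>M Ms \<theta>"
  proof (rule measurable_PiM_single')
    fix s :: nat
    show "(\<lambda>w. if s = k then fst w else snd w s) \<in> (Nu \<theta> \<Otimes>\<^sub>M RestM k \<theta>) \<rightarrow>\<^sub>M Nu \<theta>"
    proof (cases "s = k")
      case False
      then have "(\<lambda>w. snd w s) \<in> (Nu \<theta> \<Otimes>\<^sub>M RestM k \<theta>) \<rightarrow>\<^sub>M Nu \<theta>"
        by (intro measurable_compose[OF measurable_snd] measurable_component_singleton) auto
      then show ?thesis using False by simp
    qed simp
  qed auto
  have eq: "(\<lambda>w. (snd w)(k := fst w)) = (\<lambda>w s. if s = k then fst w else snd w s)"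
    by (auto simp: fun_eq_iff)
  show ?thesis by (rule ssubst[OF eq], rule m)
qed

lemma meas_ins2 [measurable]: "(\<lambda>r. r(k := b)) \<in> RestM k \<theta> \<rightarrow>\<^sub>M Ms \<theta>"
proof -
  have "(\<lambda>r. (\<lambda>w. (snd w)(k := fst w)) (b, r)) \<in> RestM k \<theta> \<rightarrow>\<^sub>M Ms \<theta>"
    by (rule measurable_compose[OF _ meas_ins]) measurable
  then show ?thesis by simp
qed

lemma meas_Jm [measurable]: "Jm k \<in> ((Xs \<theta> \<Otimes>\<^sub>M Nu \<theta>) \<Otimes>\<^sub>M RestM k \<theta>) \<rightarrow>\<^sub>M Om \<theta>"
proof -
  have e: "Jm k = (\<lambda>w. (fst (fst w), (\<lambda>w. (snd w)(k := fst w)) (snd (fst w), snd w)))"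
    by (auto simp: Jm_def fun_eq_iff)
  have m1: "(\<lambda>w. (snd (fst w), snd w)) \<in> ((Xs \<theta> \<Otimes>\<^sub>M Nu \<theta>) \<Otimes>\<^sub>M RestM k \<theta>) \<rightarrow>\<^sub>M (Nu \<theta> \<Otimes>\<^sub>M RestM k \<theta>)"
    by measurable
  have "(\<lambda>w. (fst (fst w), (\<lambda>w. (snd w)(k := fst w)) (snd (fst w), snd w))) \<in> ((Xs \<theta> \<Otimes>\<^sub>M Nu \<theta>) \<Otimes>\<^sub>M RestM k \<theta>) \<rightarrow>\<^sub>M Om \<theta>"
    unfolding Om_def
    by (rule measurable_Pair[OF _ measurable_compose[OF m1 meas_ins]]) measurable
  then show ?thesis by (subst e)
qed

lemma ins_pres: "distr (Nu \<theta> \<Otimes>\<^sub>M RestM k \<theta>) (Ms \<theta>) (\<lambda>w. (snd w)(k := fst w)) = Ms \<theta>"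
proof -
  have d: "distr (Nu \<theta> \<Otimes>\<^sub>M RestM k \<theta>) (PiM (insert k (UNIV - {k})) (\<lambda>_. Nu \<theta>)) (\<lambda>(x, X). X(k := x)) =
        PiM (insert k (UNIV - {k})) (\<lambda>_. Nu \<theta>)"
    by (rule distr_pair_PiM_eq_PiM) (auto intro: prob_space_measure_pmf)
  have u: "insert k (UNIV - {k}) = UNIV" by auto
  have eq: "(\<lambda>w. (snd w)(k := fst w)) = (\<lambda>(x, X). X(k := x))" by (auto simp: fun_eq_iff)
  show ?thesis using d unfolding u by (rule ssubst[OF eq])
qed

lemma Jm_pres: "distr ((Xs \<theta> \<Otimes>\<^sub>M Nu \<theta>) \<Otimes>\<^sub>M RestM k \<theta>) (Om \<theta>) (Jm k) = Om \<theta>"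
  unfolding Om_def
proof (rule pair_measure_eqI[symmetric])
  interpret X: prob_space "Xs \<theta>" by (rule ps_Xs)
  interpret M: prob_space "Ms \<theta>" by (rule ps_Ms)
  interpret R: prob_space "RestM k \<theta>" by (rule prob_space_PiM) (rule prob_space_measure_pmf)
  interpret XN: prob_space "Xs \<theta> \<Otimes>\<^sub>M Nu \<theta>" by (rule prob_space_pair) unfold_locales
  show "sigma_finite_measure (Xs \<theta>)" "sigma_finite_measure (Ms \<theta>)"
    by unfold_locales
  show "sets (Xs \<theta> \<Otimes>\<^sub>M Ms \<theta>) = sets (distr ((Xs \<theta> \<Otimes>\<^sub>M Nu \<theta>) \<Otimes>\<^sub>M RestM k \<theta>) (Xs \<theta> \<Otimes>\<^sub>M Ms \<theta>) (Jm k))"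
    by simp
  fix A B assume A[measurable]: "A \<in> sets (Xs \<theta>)" and B[measurable]: "B \<in> sets (Ms \<theta>)"
  note mJ = meas_Jm[of k \<theta>, unfolded Om_def]
  note [measurable] = meas_ins
  have "emeasure (distr ((Xs \<theta> \<Otimes>\<^sub>M Nu \<theta>) \<Otimes>\<^sub>M RestM k \<theta>) (Xs \<theta> \<Otimes>\<^sub>M Ms \<theta>) (Jm k)) (A \<times> B)
      = (\<integral>\<^sup>+w. indicator (A \<times> B) w \<partial>distr ((Xs \<theta> \<Otimes>\<^sub>M Nu \<theta>) \<Otimes>\<^sub>M RestM k \<theta>) (Xs \<theta> \<Otimes>\<^sub>M Ms \<theta>) (Jm k))"
    using A B by (subst nn_integral_indicator) auto
  also have "\<dots> = (\<integral>\<^sup>+w. indicator (A \<times> B) (Jm k w) \<partial>((Xs \<theta> \<Otimes>\<^sub>M Nu \<theta>) \<Otimes>\<^sub>M RestM k \<theta>))"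
    using A B mJ by (subst nn_integral_distr) auto
  also have "\<dots> = (\<integral>\<^sup>+z. \<integral>\<^sup>+r. indicator A (fst z) * indicator B (r(k := snd z)) \<partial>RestM k \<theta> \<partial>(Xs \<theta> \<Otimes>\<^sub>M Nu \<theta>))"
    using A B mJ by (subst R.nn_integral_fst[symmetric]) (auto simp: Jm_def indicator_times split_beta')
  also have "\<dots> = (\<integral>\<^sup>+z. indicator A (fst z) * (\<integral>\<^sup>+r. indicator B (r(k := snd z)) \<partial>RestM k \<theta>) \<partial>(Xs \<theta> \<Otimes>\<^sub>M Nu \<theta>))"
    by (subst nn_integral_cmult) auto
  also have "\<dots> = (\<integral>\<^sup>+Y. \<integral>\<^sup>+n. indicator A Y * (\<integral>\<^sup>+r. indicator B (r(k := n)) \<partial>RestM k \<theta>) \<partial>Nu \<theta> \<partial>Xs \<theta>)"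
  proof (subst measure_pmf.nn_integral_fst[symmetric])
    have m2: "(\<lambda>n. \<integral>\<^sup>+r. indicator B (r(k := n)) \<partial>RestM k \<theta>) \<in> borel_measurable (Nu \<theta>)" by simp
    note m3[measurable] = measurable_compose[OF measurable_snd m2]
    show "(\<lambda>z. indicator A (fst z) * (\<integral>\<^sup>+r. indicator B (r(k := snd z)) \<partial>RestM k \<theta>)) \<in> borel_measurable (Xs \<theta> \<Otimes>\<^sub>M Nu \<theta>)"
      by measurable
  qed simp
  also have "\<dots> = (\<integral>\<^sup>+Y. indicator A Y * (\<integral>\<^sup>+n. \<integral>\<^sup>+r. indicator B (r(k := n)) \<partial>RestM k \<theta> \<partial>Nu \<theta>) \<partial>Xs \<theta>)"
    by (simp add: nn_integral_cmult)
  also have "\<dots> = emeasure (Xs \<theta>) A * (\<integral>\<^sup>+n. \<integral>\<^sup>+r. indicator B (r(k := n)) \<partial>RestM k \<theta> \<partial>Nu \<theta>)"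
    using A by (simp add: nn_integral_multc)
  also have "(\<integral>\<^sup>+n. \<integral>\<^sup>+r. indicator B (r(k := n)) \<partial>RestM k \<theta> \<partial>Nu \<theta>)
      = (\<integral>\<^sup>+w. indicator B ((snd w)(k := fst w)) \<partial>(Nu \<theta> \<Otimes>\<^sub>M RestM k \<theta>))"
    by (subst R.nn_integral_fst[symmetric]) auto
  also have "\<dots> = (\<integral>\<^sup>+x. indicator B x \<partial>distr (Nu \<theta> \<Otimes>\<^sub>M RestM k \<theta>) (Ms \<theta>) (\<lambda>w. (snd w)(k := fst w)))"
    by (subst nn_integral_distr) auto
  also have "\<dots> = emeasure (Ms \<theta>) B"
    using B by (simp add: ins_pres)
  finally show "emeasure (Xs \<theta>) A * emeasure (Ms \<theta>) B =
    emeasure (distr ((Xs \<theta> \<Otimes>\<^sub>M Nu \<theta>) \<Otimes>\<^sub>M RestM k \<theta>) (Xs \<theta> \<Otimes>\<^sub>M Ms \<theta>) (Jm k)) (A \<times> B)"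
    by simp
qed


definition Um :: "nat \<Rightarrow> site stream \<times> (nat \<Rightarrow> site option) \<Rightarrow> site stream \<times> (nat \<Rightarrow> site option)" where
  "Um k = (\<lambda>(Y, N). (stepP Y (N k), N(k := flp (N k) Y)))"

lemma meas_Um [measurable]: "Um k \<in> Om \<theta> \<rightarrow>\<^sub>M Om \<theta>"
proof -
  have e: "Um k = (\<lambda>\<omega>. (stepP (fst \<omega>) (snd \<omega> k), \<lambda>s. if s = k then flp (snd \<omega> k) (Pm (fst \<omega>) (snd \<omega>) 0) else snd \<omega> s))"
    by (auto simp: Um_def fun_eq_iff)
  have m2: "(\<lambda>\<omega>. \<lambda>s. if s = k then flp (snd \<omega> k) (Pm (fst \<omega>) (snd \<omega>) 0) else snd \<omega> s) \<in> Om \<theta> \<rightarrow>\<^sub>M Ms \<theta>"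
  proof (rule measurable_PiM_single')
    fix s :: nat
    show "(\<lambda>\<omega>. if s = k then flp (snd \<omega> k) (Pm (fst \<omega>) (snd \<omega>) 0) else snd \<omega> s) \<in> Om \<theta> \<rightarrow>\<^sub>M measure_pmf (move_pmf \<theta>)"
      using meas_flp[where t=k and t'="0::nat" and \<theta>=\<theta>] meas_M[where n=s and \<theta>=\<theta>]
      by (cases "s = k") simp_all
  qed auto
  have "(\<lambda>\<omega>. (stepP (fst \<omega>) (snd \<omega> k), \<lambda>s. if s = k then flp (snd \<omega> k) (Pm (fst \<omega>) (snd \<omega>) 0) else snd \<omega> s)) \<in> Om \<theta> \<rightarrow>\<^sub>M Om \<theta>"
    unfolding Om_def[of \<theta>] using m2 meas_stepk[where k=k and \<theta>=\<theta>] unfolding Om_def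
    by (rule_tac measurable_Pair) auto
  then show ?thesis by (subst e)
qed

definition Gm :: "(site stream \<times> site option) \<times> (nat \<Rightarrow> site option) \<Rightarrow> (site stream \<times> site option) \<times> (nat \<Rightarrow> site option)" where
  "Gm = (\<lambda>(z, r). (Fm z, r))"

lemma Gm_pres: "distr ((Xs \<theta> \<Otimes>\<^sub>M Nu \<theta>) \<Otimes>\<^sub>M RestM k \<theta>) ((Xs \<theta> \<Otimes>\<^sub>M Nu \<theta>) \<Otimes>\<^sub>M RestM k \<theta>) Gm
   = (Xs \<theta> \<Otimes>\<^sub>M Nu \<theta>) \<Otimes>\<^sub>M RestM k \<theta>"
proof -
  interpret R: prob_space "RestM k \<theta>" by (rule prob_space_PiM) (rule prob_space_measure_pmf)
  have "distr (Xs \<theta> \<Otimes>\<^sub>M Nu \<theta>) (Xs \<theta> \<Otimes>\<^sub>M Nu \<theta>) Fm \<Otimes>\<^sub>M distr (RestM k \<theta>) (RestM k \<theta>) (\<lambda>x. x)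
     = distr ((Xs \<theta> \<Otimes>\<^sub>M Nu \<theta>) \<Otimes>\<^sub>M RestM k \<theta>) ((Xs \<theta> \<Otimes>\<^sub>M Nu \<theta>) \<Otimes>\<^sub>M RestM k \<theta>) (\<lambda>(x, y). (Fm x, y))"
    by (rule pair_measure_distr) (auto simp: distr_id intro: R.sigma_finite_measure_axioms)
  moreover have "(\<lambda>(x, y). (Fm x, y)) = Gm" by (auto simp: Gm_def)
  ultimately show ?thesis by (simp add: Fm_pres distr_id)
qed

lemma meas_Gm [measurable]: "Gm \<in> ((Xs \<theta> \<Otimes>\<^sub>M Nu \<theta>) \<Otimes>\<^sub>M RestM k \<theta>) \<rightarrow>\<^sub>M ((Xs \<theta> \<Otimes>\<^sub>M Nu \<theta>) \<Otimes>\<^sub>M RestM k \<theta>)"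
  unfolding Gm_def by measurable

lemma Um_Jm: "Um k \<circ> Jm k = Jm k \<circ> Gm"
  by (auto simp: Um_def Jm_def Gm_def Fm_def fun_eq_iff)

lemma Um_pres: "distr (Om \<theta>) (Om \<theta>) (Um k) = Om \<theta>"
proof -
  let ?O = "(Xs \<theta> \<Otimes>\<^sub>M Nu \<theta>) \<Otimes>\<^sub>M RestM k \<theta>"
  have "distr (Om \<theta>) (Om \<theta>) (Um k) = distr (distr ?O (Om \<theta>) (Jm k)) (Om \<theta>) (Um k)"
    by (simp add: Jm_pres)
  also have "\<dots> = distr ?O (Om \<theta>) (Um k \<circ> Jm k)"
    by (subst distr_distr) auto
  also have "\<dots> = distr ?O (Om \<theta>) (Jm k \<circ> Gm)"
    by (simp add: Um_Jm)
  also have "\<dots> = distr (distr ?O ?O Gm) (Om \<theta>) (Jm k)"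
    by (subst distr_distr) auto
  also have "\<dots> = Om \<theta>"
    by (simp add: Gm_pres Jm_pres)
  finally show ?thesis .
qed

definition rot :: "nat \<Rightarrow> nat \<Rightarrow> nat" where
  "rot k s = (if s = 0 then k else if s \<le> k then s - 1 else s)"

lemma inj_rot: "inj (rot k)"
  by (auto simp: inj_def rot_def split: if_splits)

definition Rm :: "nat \<Rightarrow> site stream \<times> (nat \<Rightarrow> site option) \<Rightarrow> site stream \<times> (nat \<Rightarrow> site option)" where
  "Rm k = (\<lambda>(Y, N). (Y, \<lambda>s. N (rot k s)))"

lemma rot_Ms: "distr (Ms \<theta>) (Ms \<theta>) (\<lambda>N s. N (rot k s)) = Ms \<theta>"
proof -
  have "distr (Ms \<theta>) (PiM UNIV (\<lambda>i. (\<lambda>_. Nu \<theta>) (rot k i))) (\<lambda>\<omega>. \<lambda>n\<in>UNIV. \<omega> (rot k n)) = PiM UNIV (\<lambda>i. (\<lambda>_. Nu \<theta>) (rot k i))"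
    by (rule distr_PiM_reindex) (auto intro: prob_space_measure_pmf inj_rot)
  then show ?thesis by (simp add: restrict_def)
qed

lemma meas_rot [measurable]: "(\<lambda>N s. N (rot k s)) \<in> Ms \<theta> \<rightarrow>\<^sub>M Ms \<theta>"
  by (rule measurable_PiM_single') auto

lemma Rm_pres: "distr (Om \<theta>) (Om \<theta>) (Rm k) = Om \<theta>"
proof -
  interpret M: prob_space "Ms \<theta>" by (rule ps_Ms)
  have "distr (Xs \<theta>) (Xs \<theta>) (\<lambda>x. x) \<Otimes>\<^sub>M distr (Ms \<theta>) (Ms \<theta>) (\<lambda>N s. N (rot k s))
     = distr (Xs \<theta> \<Otimes>\<^sub>M Ms \<theta>) (Xs \<theta> \<Otimes>\<^sub>M Ms \<theta>) (\<lambda>(x, y). (x, (\<lambda>N s. N (rot k s)) y))"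
    by (rule pair_measure_distr) (auto simp: rot_Ms intro: M.sigma_finite_measure_axioms)
  moreover have "(\<lambda>(x, y). (x, (\<lambda>N s. N (rot k s)) y)) = Rm k" by (auto simp: Rm_def fun_eq_iff)
  ultimately show ?thesis by (simp add: Om_def rot_Ms distr_id)
qed

lemma meas_Rm [measurable]: "Rm k \<in> Om \<theta> \<rightarrow>\<^sub>M Om \<theta>"
  unfolding Rm_def Om_def by measurable

lemma Vk_eq: "Vk k = Rm k \<circ> Um k"
  by (auto simp: Vk_def Rm_def Um_def rot_def fun_eq_iff)

lemma Vk_pres: "distr (Om \<theta>) (Om \<theta>) (Vk k) = Om \<theta>"
proof -
  have "distr (Om \<theta>) (Om \<theta>) (Rm k \<circ> Um k) = distr (distr (Om \<theta>) (Om \<theta>) (Um k)) (Om \<theta>) (Rm k)"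
    by (rule distr_distr[symmetric]) auto
  then show ?thesis unfolding Vk_eq by (simp add: Um_pres Rm_pres)
qed

lemma Rk_pres: "distr (Om \<theta>) (Om \<theta>) (Rk k) = Om \<theta>"
proof (induction k)
  case 0
  have "Rk 0 = (\<lambda>x. x)" by (auto simp: Rk_def fun_eq_iff)
  then show ?case by (simp add: distr_id)
next
  case (Suc k)
  have "distr (Om \<theta>) (Om \<theta>) (Vk k \<circ> Rk k) = distr (distr (Om \<theta>) (Om \<theta>) (Rk k)) (Om \<theta>) (Vk k)"
    by (rule distr_distr[symmetric]) auto
  then show ?case unfolding Rk_Suc by (simp add: Suc Vk_pres comp_def)
qed


lemma nn_integral_PiM_prod:
  fixes p :: "'a pmf"
  assumes J: "finite J"
  shows "(\<integral>\<^sup>+x. (\<Prod>j\<in>J. f j (x j)) \<partial>PiM (UNIV::nat set) (\<lambda>_. measure_pmf p)) = (\<Prod>j\<in>J. \<integral>\<^sup>+y. f j y \<partial>measure_pmf p)"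
proof -
  interpret product_prob_space "\<lambda>_::nat. measure_pmf p" UNIV
    by unfold_locales
  have "(\<integral>\<^sup>+x. (\<Prod>j\<in>J. f j (x j)) \<partial>PiM UNIV (\<lambda>_. measure_pmf p))
      = (\<integral>\<^sup>+x. (\<Prod>j\<in>J. f j (restrict x J j)) \<partial>PiM UNIV (\<lambda>_. measure_pmf p))"
    by (intro nn_integral_cong prod.cong) auto
  also have "\<dots> = (\<integral>\<^sup>+x. (\<Prod>j\<in>J. f j (x j)) \<partial>distr (PiM UNIV (\<lambda>_. measure_pmf p)) (PiM J (\<lambda>_. measure_pmf p)) (\<lambda>x. restrict x J))"
    by (subst nn_integral_distr) (auto intro!: borel_measurable_prod_ennreal measurable_compose[OF measurable_component_singleton])
  also have "\<dots> = (\<integral>\<^sup>+x. (\<Prod>j\<in>J. f j (x j)) \<partial>PiM J (\<lambda>_. measure_pmf p))"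
    using J by (subst distr_PiM_restrict_finite) auto
  also have "\<dots> = (\<Prod>j\<in>J. \<integral>\<^sup>+y. f j y \<partial>measure_pmf p)"
    using J by (subst product_nn_integral_prod) auto
  finally show ?thesis .
qed


lemma prod_indicator_all:
  "finite J \<Longrightarrow> (\<Prod>j\<in>J. indicator (A j) (f j) :: ennreal) = (if \<forall>j\<in>J. f j \<in> A j then 1 else 0)"
  by (induction J rule: finite_induct) (auto simp: indicator_def)

lemma meas_pair_count:
  assumes "f \<in> M \<rightarrow>\<^sub>M count_space UNIV" "g \<in> M \<rightarrow>\<^sub>M count_space UNIV"
  shows "(\<lambda>x. (f x, g x)) \<in> M \<rightarrow>\<^sub>M count_space (UNIV :: ('a::countable \<times> 'b::countable) set)"
proof -
  have "(\<lambda>x. (f x, g x)) \<in> M \<rightarrow>\<^sub>M count_space (UNIV::'a set) \<Otimes>\<^sub>M count_space (UNIV::'b set)"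
    using assms by measurable
  then show ?thesis using pair_measure_countable[of "UNIV::'a set" "UNIV::'b set"] by simp
qed

abbreviation Mu :: "site pmf \<Rightarrow> (site \<times> site option) measure" where
  "Mu \<theta> \<equiv> measure_pmf (pair_pmf \<theta> (move_pmf \<theta>))"

abbreviation Th :: "site pmf \<Rightarrow> (nat \<Rightarrow> site) measure" where
  "Th \<theta> \<equiv> PiM (UNIV::nat set) (\<lambda>_. measure_pmf \<theta>)"

definition Zm :: "(nat \<Rightarrow> site) \<times> (nat \<Rightarrow> site option) \<Rightarrow> nat \<Rightarrow> site \<times> site option" where
  "Zm = (\<lambda>w n. (fst w n, snd w n))"

lemma meas_Zm [measurable]: "Zm \<in> (Th \<theta> \<Otimes>\<^sub>M Ms \<theta>) \<rightarrow>\<^sub>M PiM UNIV (\<lambda>_. Mu \<theta>)"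
  unfolding Zm_def
  by (rule measurable_PiM_single') (auto intro!: meas_pair_count)

lemma Zm_pres: "distr (Th \<theta> \<Otimes>\<^sub>M Ms \<theta>) (PiM UNIV (\<lambda>_. Mu \<theta>)) Zm = PiM UNIV (\<lambda>_. Mu \<theta>)"
proof (rule measure_eqI_PiM_infinite[symmetric, OF refl])
  interpret P: prob_space "PiM UNIV (\<lambda>_::nat. Mu \<theta>)" by (rule prob_space_PiM) (rule prob_space_measure_pmf)
  interpret M: prob_space "Ms \<theta>" by (rule ps_Ms)
  show "finite_measure (PiM UNIV (\<lambda>_::nat. Mu \<theta>))" by unfold_locales
  show "sets (distr (Th \<theta> \<Otimes>\<^sub>M Ms \<theta>) (PiM UNIV (\<lambda>_. Mu \<theta>)) Zm) = sets (PiM UNIV (\<lambda>_. Mu \<theta>))"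
    by simp
  fix A J assume J: "finite J" "J \<subseteq> (UNIV::nat set)" and A: "\<And>i. i \<in> J \<Longrightarrow> A i \<in> sets (Mu \<theta>)"
  let ?X = "prod_emb UNIV (\<lambda>_. Mu \<theta>) J (Pi\<^sub>E J A)"
  have X: "?X \<in> sets (PiM UNIV (\<lambda>_. Mu \<theta>))"
    using J A by (intro sets_PiM_I) auto
  have ind: "\<And>f. indicator ?X f = (\<Prod>j\<in>J. indicator (A j) (f j) :: ennreal)"
    using J by (subst prod_indicator_all) (auto simp: prod_emb_def space_PiM indicator_def PiE_iff)
  have "emeasure (distr (Th \<theta> \<Otimes>\<^sub>M Ms \<theta>) (PiM UNIV (\<lambda>_. Mu \<theta>)) Zm) ?X
     = (\<integral>\<^sup>+f. indicator ?X f \<partial>distr (Th \<theta> \<Otimes>\<^sub>M Ms \<theta>) (PiM UNIV (\<lambda>_. Mu \<theta>)) Zm)"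
    using X by (subst nn_integral_indicator) auto
  also have "\<dots> = (\<integral>\<^sup>+w. indicator ?X (Zm w) \<partial>(Th \<theta> \<Otimes>\<^sub>M Ms \<theta>))"
    using X by (subst nn_integral_distr) auto
  also have "\<dots> = (\<integral>\<^sup>+w. (\<Prod>j\<in>J. indicator (A j) (fst w j, snd w j)) \<partial>(Th \<theta> \<Otimes>\<^sub>M Ms \<theta>))"
    by (simp add: ind Zm_def)
  also have "\<dots> = (\<integral>\<^sup>+x. \<integral>\<^sup>+M. (\<Prod>j\<in>J. indicator (A j) (x j, M j)) \<partial>Ms \<theta> \<partial>Th \<theta>)"
  proof (subst M.nn_integral_fst[symmetric])
    show "(\<lambda>w. \<Prod>j\<in>J. indicator (A j) (fst w j, snd w j) :: ennreal) \<in> borel_measurable (Th \<theta> \<Otimes>\<^sub>M Ms \<theta>)"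
    proof (intro borel_measurable_prod_ennreal)
      fix j assume "j \<in> J"
      have "(\<lambda>w. (fst w j, snd w j)) \<in> (Th \<theta> \<Otimes>\<^sub>M Ms \<theta>) \<rightarrow>\<^sub>M count_space UNIV"
        by (intro meas_pair_count) measurable
      then show "(\<lambda>w. indicator (A j) (fst w j, snd w j) :: ennreal) \<in> borel_measurable (Th \<theta> \<Otimes>\<^sub>M Ms \<theta>)"
        by (rule measurable_compose) simp
    qed
  qed simp
  also have "\<dots> = (\<integral>\<^sup>+x. (\<Prod>j\<in>J. \<integral>\<^sup>+u. indicator (A j) (x j, u) \<partial>Nu \<theta>) \<partial>Th \<theta>)"
    using J by (subst nn_integral_PiM_prod) auto
  also have "\<dots> = (\<Prod>j\<in>J. \<integral>\<^sup>+y. \<integral>\<^sup>+u. indicator (A j) (y, u) \<partial>Nu \<theta> \<partial>measure_pmf \<theta>)"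
    using J by (subst nn_integral_PiM_prod[where f="\<lambda>j y. \<integral>\<^sup>+u. indicator (A j) (y, u) \<partial>Nu \<theta>"]) auto
  also have "\<dots> = (\<Prod>j\<in>J. emeasure (Mu \<theta>) (A j))"
    by (intro prod.cong refl) (simp add: nn_integral_pair_pmf'[symmetric])
  also have "\<dots> = emeasure (PiM UNIV (\<lambda>_. Mu \<theta>)) ?X"
    using J A by (subst emeasure_PiM_emb) (auto intro: prob_space_measure_pmf)
  finally show "emeasure (PiM UNIV (\<lambda>_. Mu \<theta>)) ?X = emeasure (distr (Th \<theta> \<Otimes>\<^sub>M Ms \<theta>) (PiM UNIV (\<lambda>_. Mu \<theta>)) Zm) ?X"
    by simp
qed


definition Phi :: "site stream \<times> (nat \<Rightarrow> site option) \<Rightarrow> (site \<times> site option) stream" where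
  "Phi = (\<lambda>w. to_stream (\<lambda>n. (fst w !! n, snd w n)))"

lemma meas_snthX [measurable]: "(\<lambda>\<omega>. fst \<omega> !! n) \<in> Om \<theta> \<rightarrow>\<^sub>M count_space UNIV"
proof -
  have "(\<lambda>\<omega>. fst \<omega> !! n) \<in> Om \<theta> \<rightarrow>\<^sub>M measure_pmf \<theta>" by measurable
  then show ?thesis by simp
qed

lemma meas_Phi [measurable]: "Phi \<in> Om \<theta> \<rightarrow>\<^sub>M snake_space \<theta>"
proof -
  have "(\<lambda>w n. (fst w !! n, snd w n)) \<in> Om \<theta> \<rightarrow>\<^sub>M PiM UNIV (\<lambda>_. Mu \<theta>)"
    by (rule measurable_PiM_single') (auto intro!: meas_pair_count)
  then show ?thesis unfolding Phi_def snake_space_def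
    by (rule measurable_compose[OF _ measurable_to_stream])
qed

lemma Phi_pres: "distr (Om \<theta>) (snake_space \<theta>) Phi = snake_space \<theta>"
proof -
  interpret M: prob_space "Ms \<theta>" by (rule ps_Ms)
  have Om: "Om \<theta> = distr (Th \<theta> \<Otimes>\<^sub>M Ms \<theta>) (Xs \<theta> \<Otimes>\<^sub>M Ms \<theta>) (\<lambda>(x, y). (to_stream x, y))"
  proof -
    have "distr (Th \<theta>) (Xs \<theta>) to_stream \<Otimes>\<^sub>M distr (Ms \<theta>) (Ms \<theta>) (\<lambda>x. x)
      = distr (Th \<theta> \<Otimes>\<^sub>M Ms \<theta>) (Xs \<theta> \<Otimes>\<^sub>M Ms \<theta>) (\<lambda>(x, y). (to_stream x, y))"
      by (rule pair_measure_distr) (auto simp: distr_id intro: M.sigma_finite_measure_axioms)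
    then show ?thesis
      by (simp add: Om_def distr_id stream_space_eq_distr[symmetric])
  qed
  have mt: "(\<lambda>(x, y). (to_stream x, y)) \<in> (Th \<theta> \<Otimes>\<^sub>M Ms \<theta>) \<rightarrow>\<^sub>M Om \<theta>"
    unfolding Om_def by measurable
  have "distr (Om \<theta>) (snake_space \<theta>) Phi = distr (Th \<theta> \<Otimes>\<^sub>M Ms \<theta>) (snake_space \<theta>) (Phi \<circ> (\<lambda>(x, y). (to_stream x, y)))"
    apply (subst (1) Om)
    apply (subst distr_distr)
      apply (rule meas_Phi[unfolded Om_def])
     apply (rule mt[unfolded Om_def])
    apply (simp add: Om_def)
    done
  also have "Phi \<circ> (\<lambda>(x, y). (to_stream x, y)) = to_stream \<circ> Zm"
    by (auto simp: Phi_def Zm_def fun_eq_iff to_stream_def)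
  also have "distr (Th \<theta> \<Otimes>\<^sub>M Ms \<theta>) (snake_space \<theta>) (to_stream \<circ> Zm)
      = distr (distr (Th \<theta> \<Otimes>\<^sub>M Ms \<theta>) (PiM UNIV (\<lambda>_. Mu \<theta>)) Zm) (snake_space \<theta>) to_stream"
    by (rule distr_distr[symmetric]) (auto simp: snake_space_def)
  also have "\<dots> = snake_space \<theta>"
    unfolding Zm_pres snake_space_def by (rule stream_space_eq_distr[symmetric])
  finally show ?thesis .
qed


lemma uniform_measure_distr':
  assumes f[measurable]: "f \<in> M \<rightarrow>\<^sub>M N" and A[measurable]: "A \<in> sets N"
  shows "uniform_measure (distr M N f) A = distr (uniform_measure M (f -` A \<inter> space M)) N f"
proof -
  have e: "emeasure (distr M N f) A = emeasure M (f -` A \<inter> space M)"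
    by (rule emeasure_distr) auto
  have "density (distr M N f) (\<lambda>x. indicator A x / emeasure (distr M N f) A)
      = distr (density M (\<lambda>x. indicator A (f x) / emeasure (distr M N f) A)) N f"
    by (rule density_distr) auto
  also have "density M (\<lambda>x. indicator A (f x) / emeasure (distr M N f) A)
      = density M (\<lambda>x. indicator (f -` A \<inter> space M) x / emeasure M (f -` A \<inter> space M))"
    by (rule density_cong) (auto simp: e indicator_def)
  finally show ?thesis by (simp add: uniform_measure_def)
qed

lemma uniform_measure_pres:
  assumes T[measurable]: "T \<in> M \<rightarrow>\<^sub>M M" and D: "distr M M T = M" and A[measurable]: "A \<in> sets M"
    and TA: "T -` A \<inter> space M = A"
  shows "distr (uniform_measure M A) M T = uniform_measure M A"
proof -
  have "density (distr M M T) (\<lambda>x. indicator A x / emeasure M A)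
      = distr (density M (\<lambda>x. indicator A (T x) / emeasure M A)) M T"
    by (rule density_distr) auto
  also have "density M (\<lambda>x. indicator A (T x) / emeasure M A) = density M (\<lambda>x. indicator A x / emeasure M A)"
  proof (rule density_cong)
    show "AE x in M. indicator A (T x) / emeasure M A = indicator A x / emeasure M A"
    proof (rule AE_I2)
      fix x assume x: "x \<in> space M"
      have "T x \<in> A \<longleftrightarrow> x \<in> A" using TA x by blast
      then show "indicator A (T x) / emeasure M A = indicator A x / emeasure M A"
        by (simp add: indicator_def)
    qed
  qed auto
  finally show ?thesis using D by (simp add: uniform_measure_def)
qed


definition iota :: "(site \<times> site option) stream \<Rightarrow> site stream \<times> (nat \<Rightarrow> site option)" where
  "iota \<omega> = (smap fst \<omega>, \<lambda>n. snd (\<omega> !! n))"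

lemma to_stream_snth [simp]: "to_stream X !! n = X n"
  by (simp add: to_stream_def)

lemma iota_Phi: "iota (Phi w) = w"
  by (cases w) (simp add: iota_def Phi_def smap_alt)

lemma meas_snd_snth [measurable]: "(\<lambda>\<omega>. snd (\<omega> !! n)) \<in> snake_space \<theta> \<rightarrow>\<^sub>M count_space UNIV"
proof -
  have "(\<lambda>\<omega>. \<omega> !! n) \<in> snake_space \<theta> \<rightarrow>\<^sub>M Mu \<theta>"
    unfolding snake_space_def by measurable
  moreover have "snd \<in> Mu \<theta> \<rightarrow>\<^sub>M count_space UNIV" by simp
  ultimately show ?thesis by (rule measurable_compose)
qed

lemma meas_iota [measurable]: "iota \<in> snake_space \<theta> \<rightarrow>\<^sub>M Om \<theta>"
  unfolding iota_def Om_def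
  apply (rule measurable_Pair)
  apply (unfold snake_space_def) apply (rule measurable_smap) apply simp
  apply (fold snake_space_def)
  apply (rule measurable_PiM_single')
  subgoal for i using meas_snd_snth[of i \<theta>] by simp
  apply simp
  done

definition Wt' :: "nat \<Rightarrow> site stream \<times> (nat \<Rightarrow> site option) \<Rightarrow> int \<Rightarrow> site" where
  "Wt' k w = (\<lambda>j. if j \<le> 0 then tpm (fst w) (snd w) k + Gp (Pm (fst w) (snd w) k) j else 0)"

definition H1' :: "nat \<Rightarrow> site stream \<times> (nat \<Rightarrow> site option) \<Rightarrow> (int \<Rightarrow> site) \<times> (int \<Rightarrow> site)" where
  "H1' k w = (Gp (fst w), Wt' k w)"
definition H2' :: "nat \<Rightarrow> site stream \<times> (nat \<Rightarrow> site option) \<Rightarrow> (int \<Rightarrow> site) \<times> (int \<Rightarrow> site)" where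
  "H2' k w = (Wt' k w, Gp (fst w))"

lemma W0_eq: "W0 \<omega> = Gp (fst (iota \<omega>))"
  by (rule ext) (simp add: W0_def Gp_def rw_def iota_def)

lemma Wtilde_eq: "Wtilde \<omega> k = Wt' k (iota \<omega>)"
proof
  fix j :: int
  show "Wtilde \<omega> k j = Wt' k (iota \<omega>) j"
  proof (cases "j \<le> 0")
    case True
    have "snd (snake \<omega> k) (fst (snake \<omega> k) - int (nat (- j))) = tpm (smap fst \<omega>) (\<lambda>n. snd (\<omega> !! n)) k -
       (\<Sum>i'<nat (- j). Pm (smap fst \<omega>) (\<lambda>n. snd (\<omega> !! n)) k !! i')"
      using snake_repr[of \<omega> k] by blast
    moreover have "int (nat (- j)) = - j" using True by simp
    ultimately have "snd (snake \<omega> k) (fst (snake \<omega> k) + j) = tpm (smap fst \<omega>) (\<lambda>n. snd (\<omega> !! n)) k -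
       (\<Sum>i'<nat (- j). Pm (smap fst \<omega>) (\<lambda>n. snd (\<omega> !! n)) k !! i')"
      by simp
    then show ?thesis using True
      by (simp add: Wtilde_def Wt'_def lifetime_def Gp_def iota_def)
  qed (simp add: Wtilde_def Wt'_def)
qed

lemma tip_eq: "tip (snake \<omega> k) = tpm (fst (iota \<omega>)) (snd (iota \<omega>)) k"
  using snake_repr[of \<omega> k] by (simp add: iota_def)


lemma space_Om: "space (Om \<theta>) = UNIV"
  by (auto simp: Om_def space_pair_measure space_stream_space space_PiM)

lemma meas_plus:
  assumes "f \<in> M \<rightarrow>\<^sub>M count_space UNIV" "g \<in> M \<rightarrow>\<^sub>M count_space UNIV"
  shows "(\<lambda>x. f x + g x :: site) \<in> M \<rightarrow>\<^sub>M count_space UNIV"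
proof -
  have "(\<lambda>x. (f x, g x)) \<in> M \<rightarrow>\<^sub>M count_space UNIV" by (rule meas_pair_count[OF assms])
  moreover have "(\<lambda>p. fst p + snd p :: site) \<in> count_space UNIV \<rightarrow>\<^sub>M count_space UNIV" by simp
  ultimately show ?thesis by (rule measurable_compose[where f="\<lambda>x. (f x, g x)" and g="\<lambda>p. fst p + snd p", simplified])
qed

lemma meas_sum_snth: "(\<lambda>Y. \<Sum>i<n. Y !! i) \<in> Xs \<theta> \<rightarrow>\<^sub>M count_space UNIV"
proof (induction n)
  case 0 then show ?case by simp
next
  case (Suc n)
  have "(\<lambda>Y. Y !! n) \<in> Xs \<theta> \<rightarrow>\<^sub>M count_space UNIV"
  proof -
    have "(\<lambda>Y. Y !! n) \<in> Xs \<theta> \<rightarrow>\<^sub>M measure_pmf \<theta>" by measurable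
    then show ?thesis by simp
  qed
  then show ?case using Suc by (simp add: meas_plus)
qed

lemma meas_Gpj: "(\<lambda>Y. Gp Y j) \<in> Xs \<theta> \<rightarrow>\<^sub>M count_space UNIV"
proof (cases "j \<le> 0")
  case True
  have "(\<lambda>Y. - (\<Sum>i<nat (- j). Y !! i)) \<in> Xs \<theta> \<rightarrow>\<^sub>M count_space UNIV"
    using meas_sum_snth[of "nat (- j)" \<theta>] by (rule measurable_compose) simp
  then show ?thesis using True by (simp add: Gp_def)
qed (simp add: Gp_def)

lemma meas_Gp [measurable]: "Gp \<in> Xs \<theta> \<rightarrow>\<^sub>M path_space"
  unfolding path_space_def
  by (rule measurable_PiM_single'[where f="\<lambda>j Y. Gp Y j", simplified]) (auto intro: meas_Gpj)

lemma meas_Wt' [measurable]: "Wt' k \<in> Om \<theta> \<rightarrow>\<^sub>M path_space"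
  unfolding path_space_def
proof (rule measurable_PiM_single'[where f="\<lambda>j w. Wt' k w j", simplified])
  fix j :: int
  show "(\<lambda>w. Wt' k w j) \<in> Om \<theta> \<rightarrow>\<^sub>M count_space UNIV"
  proof (cases "j \<le> 0")
    case True
    have "(\<lambda>w. Gp (Pm (fst w) (snd w) k) j) \<in> Om \<theta> \<rightarrow>\<^sub>M count_space UNIV"
      by (rule measurable_compose[OF meas_Pm meas_Gpj])
    then have "(\<lambda>w. tpm (fst w) (snd w) k + Gp (Pm (fst w) (snd w) k) j) \<in> Om \<theta> \<rightarrow>\<^sub>M count_space UNIV"
      by (intro meas_plus meas_tpm)
    then show ?thesis using True by (simp add: Wt'_def)
  qed (simp add: Wt'_def)
qed auto

lemma meas_H1' [measurable]: "H1' k \<in> Om \<theta> \<rightarrow>\<^sub>M pair_path_space"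
  unfolding H1'_def pair_path_space_def by measurable

lemma meas_H2' [measurable]: "H2' k \<in> Om \<theta> \<rightarrow>\<^sub>M pair_path_space"
  unfolding H2'_def pair_path_space_def by measurable

lemma key_identity:
  assumes "tpm (fst w) (snd w) k = 0"
  shows "H2' k w = H1' k (Rk k w)" and "tpm (fst (Rk k w)) (snd (Rk k w)) k = 0"
proof -
  obtain X M where w: "w = (X, M)" by (cases w)
  have r: "Pm (fst (Rk k (X, M))) (snd (Rk k (X, M))) k = X"
       "tpm (fst (Rk k (X, M))) (snd (Rk k (X, M))) k = - tpm X M k"
    using reversal[of k k X M] by auto
  have f: "fst (Rk k (X, M)) = Pm X M k" by (simp add: Rk_def)
  have t0: "tpm X M k = 0" using assms w by simp
  show "H2' k w = H1' k (Rk k w)"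
    using r t0 unfolding w H1'_def H2'_def Wt'_def f
    by (auto simp: fun_eq_iff Gp_def)
  show "tpm (fst (Rk k w)) (snd (Rk k w)) k = 0" using r t0 w by simp
qed

lemma tpm_Rk: "tpm (fst (Rk k w)) (snd (Rk k w)) k = - tpm (fst w) (snd w) k"
proof -
  obtain X M where w: "w = (X, M)" by (cases w)
  show ?thesis using reversal[of k k X M] w by auto
qed


theorem lemma3p9:
  fixes \<theta> :: "site pmf" and \<sigma> :: real and k :: nat
  assumes "symmetric_law \<theta>"
    and "small_exp_moments \<theta>"
    and "not_on_strict_subgroup \<theta>"
    and "covariance_scalar \<theta> \<sigma>"
    and "k \<ge> 1"
    and "measure (snake_space \<theta>) {\<omega> \<in> space (snake_space \<theta>). tip (snake \<omega> k) = 0} > 0"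
  shows "distr (uniform_measure (snake_space \<theta>)
                  {\<omega> \<in> space (snake_space \<theta>). tip (snake \<omega> k) = 0})
               pair_path_space (\<lambda>\<omega>. (W0 \<omega>, Wtilde \<omega> k))
       = distr (uniform_measure (snake_space \<theta>)
                  {\<omega> \<in> space (snake_space \<theta>). tip (snake \<omega> k) = 0})
               pair_path_space (\<lambda>\<omega>. (Wtilde \<omega> k, W0 \<omega>))"
proof -
  define E where "E = {\<omega> \<in> space (snake_space \<theta>). tip (snake \<omega> k) = 0}"
  define E' where "E' = {w \<in> space (Om \<theta>). tpm (fst w) (snd w) k = 0}"
  define U where "U = uniform_measure (Om \<theta>) E'"
  have mt[measurable]: "(\<lambda>\<omega>. tpm (fst (iota \<omega>)) (snd (iota \<omega>)) k) \<in> snake_space \<theta> \<rightarrow>\<^sub>M count_space UNIV"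
    by (rule measurable_compose[OF meas_iota meas_tpm])
  have E'm[measurable]: "E' \<in> sets (Om \<theta>)" unfolding E'_def by measurable
  have Ee: "E = {\<omega> \<in> space (snake_space \<theta>). tpm (fst (iota \<omega>)) (snd (iota \<omega>)) k = 0}"
    unfolding E_def by (simp add: tip_eq)
  have Em[measurable]: "E \<in> sets (snake_space \<theta>)" unfolding Ee by measurable
  have PhiE: "Phi -` E \<inter> space (Om \<theta>) = E'"
    using measurable_space[OF meas_Phi]
    by (auto simp: Ee E'_def iota_Phi)
  have sU: "sets U = sets (Om \<theta>)" by (simp add: U_def)
  have uS: "uniform_measure (snake_space \<theta>) E = distr U (snake_space \<theta>) Phi"
  proof -
    have "uniform_measure (snake_space \<theta>) E = uniform_measure (distr (Om \<theta>) (snake_space \<theta>) Phi) E"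
      by (simp add: Phi_pres)
    also have "\<dots> = distr U (snake_space \<theta>) Phi"
      unfolding U_def by (subst uniform_measure_distr') (auto simp: PhiE)
    finally show ?thesis .
  qed
  have PhiU: "Phi \<in> U \<rightarrow>\<^sub>M snake_space \<theta>"
    using meas_Phi by (subst measurable_cong_sets[OF sU refl])
  have H1: "(\<lambda>\<omega>. (W0 \<omega>, Wtilde \<omega> k)) = (\<lambda>\<omega>. H1' k (iota \<omega>))"
    by (simp add: fun_eq_iff H1'_def W0_eq Wtilde_eq)
  have H2: "(\<lambda>\<omega>. (Wtilde \<omega> k, W0 \<omega>)) = (\<lambda>\<omega>. H2' k (iota \<omega>))"
    by (simp add: fun_eq_iff H2'_def W0_eq Wtilde_eq)
  have H1m: "(\<lambda>\<omega>. H1' k (iota \<omega>)) \<in> snake_space \<theta> \<rightarrow>\<^sub>M pair_path_space"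
    by (rule measurable_compose[OF meas_iota meas_H1'])
  have H2m: "(\<lambda>\<omega>. H2' k (iota \<omega>)) \<in> snake_space \<theta> \<rightarrow>\<^sub>M pair_path_space"
    by (rule measurable_compose[OF meas_iota meas_H2'])
  have L: "distr (uniform_measure (snake_space \<theta>) E) pair_path_space (\<lambda>\<omega>. (W0 \<omega>, Wtilde \<omega> k))
      = distr U pair_path_space (H1' k)"
    unfolding uS H1 by (subst distr_distr[OF H1m PhiU]) (simp add: comp_def iota_Phi)
  have R: "distr (uniform_measure (snake_space \<theta>) E) pair_path_space (\<lambda>\<omega>. (Wtilde \<omega> k, W0 \<omega>))
      = distr U pair_path_space (H2' k)"
    unfolding uS H2 by (subst distr_distr[OF H2m PhiU]) (simp add: comp_def iota_Phi)
  have RkU: "Rk k \<in> U \<rightarrow>\<^sub>M Om \<theta>"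
    using meas_Rk by (subst measurable_cong_sets[OF sU refl])
  have H1U: "H1' k \<in> Om \<theta> \<rightarrow>\<^sub>M pair_path_space" by (rule meas_H1')
  have "distr U pair_path_space (H2' k) = distr U pair_path_space (H1' k \<circ> Rk k)"
  proof (rule distr_cong_AE)
    show "AE x in U. H2' k x = (H1' k \<circ> Rk k) x"
      unfolding U_def
      by (rule AE_uniform_measureI[OF E'm]) (auto simp: E'_def key_identity)
    show "H2' k \<in> U \<rightarrow>\<^sub>M pair_path_space"
      using meas_H2' by (subst measurable_cong_sets[OF sU refl])
    show "H1' k \<circ> Rk k \<in> U \<rightarrow>\<^sub>M pair_path_space"
      using measurable_comp[OF RkU H1U] .
  qed auto
  also have "\<dots> = distr (distr U (Om \<theta>) (Rk k)) pair_path_space (H1' k)"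
    by (rule distr_distr[symmetric, OF H1U RkU])
  also have "distr U (Om \<theta>) (Rk k) = U"
    unfolding U_def
  proof (rule uniform_measure_pres)
    show "Rk k -` E' \<inter> space (Om \<theta>) = E'"
      by (auto simp: E'_def tpm_Rk space_Om)
  qed (auto simp: Rk_pres)
  finally show ?thesis unfolding E_def[symmetric] L R ..
qed


end
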